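(* Let $s\ge1$. If $f\in C^2(\mathbb{R}^s)$ and $H_n(f)<\infty$ for some $n\in\mathbb{N}_0$, then for any $n_0\in\mathbb{N}_0$ there exists a constant $C>0$ depending only on $n_0$ and $f$ such that $$\left|\sum_{\alpha\in\mathbb{Z}^s}2^{-ns}\left|\nabla f(x_\alpha^n)\right|_2-\int_{\mathbb{R}^s}|\nabla f(x)|_2\,dx\right|\le C\,2^{-n}\int_{\mathbb{R}^s}\left|D^2f(x)\right|_F\,dx\qquad\text{for all }n\ge n_0.$$
   Context: $x_\alpha^n:=2^{-n}(\alpha+\frac12(1,\dots,1))$ for $n\in\mathbb{N}_0$, $\alpha\in\mathbb{Z}^s$; $|\cdot|_2$ is the Euclidean norm. $|D^2f(x)|_F:=\big(\sum_{j,k=1}^s(\partial^2f(x)/\partial x_j\partial x_k)^2\big)^{1/2}$, and $H_n(f):=\sum_{\alpha\in\mathbb{Z}^s}2^{-ns}\max_{x\in x_\alpha^n+2^{-n}[-\frac12,\frac12]^s}|D^2f(x)|_F$ (possibly $+\infty$). *)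

theory Defs
  imports "HOL-Analysis.Analysis"
begin

definition grid_pt :: "nat \<Rightarrow> int ^ 'n \<Rightarrow> real ^ 'n" where
  "grid_pt n \<alpha> = inverse (2 ^ n) *\<^sub>R (\<chi> j. real_of_int (\<alpha> $ j) + 1 / 2)"

definition grid_cube :: "nat \<Rightarrow> int ^ 'n \<Rightarrow> (real ^ 'n) set" where
  "grid_cube n \<alpha> = {y. \<forall>j. \<bar>y $ j - grid_pt n \<alpha> $ j\<bar> \<le> inverse (2 ^ n) / 2}"

definition frob :: "real ^ 'n ^ 'n \<Rightarrow> real" where
  "frob M = sqrt (\<Sum>j\<in>UNIV. \<Sum>k\<in>UNIV. (M $ j $ k)\<^sup>2)"

text \<open>H_n(f), given the Hessian field Hs of f; value in [0,\<infinity>].\<close>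
definition Hn :: "nat \<Rightarrow> (real ^ 'n \<Rightarrow> real ^ 'n ^ 'n) \<Rightarrow> ennreal" where
  "Hn n Hs = (\<Sum>\<^sub>\<infinity>\<alpha>\<in>(UNIV :: (int ^ 'n) set).
      ennreal (inverse (2 ^ (n * CARD('n))) * (SUP x\<in>grid_cube n \<alpha>. frob (Hs x))))"

end

theory Submission
  imports Defs
begin




lemma cs_to_infsum:
  fixes f :: "'a \<Rightarrow> real"
  assumes nn: "\<And>x. f x \<ge> 0" and sm: "f summable_on UNIV"
  shows "(\<integral>\<^sup>+x. ennreal (f x) \<partial>count_space UNIV) = ennreal (infsum f UNIV)"
proof -
  have "Infinite_Sum.abs_summable_on f UNIV"
    using sm summable_on_iff_abs_summable_on_real by blast
  then have a: "Infinite_Set_Sum.abs_summable_on f UNIV" using abs_summable_equivalent by blast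
  have "(\<integral>\<^sup>+x. ennreal (f x) \<partial>count_space UNIV) = ennreal (infsetsum f UNIV)"
    using nn_integral_conv_infsetsum[OF a] nn by simp
  also have "\<dots> = ennreal (infsum f UNIV)" using infsetsum_infsum[OF a] by simp
  finally show ?thesis .
qed

lemma infsum_from_cs:
  fixes f :: "'a \<Rightarrow> real"
  assumes nn: "\<And>x. f x \<ge> 0" and fin: "(\<integral>\<^sup>+x. ennreal (f x) \<partial>count_space UNIV) < \<infinity>"
  shows "f summable_on UNIV"
proof -
  have "integrable (count_space UNIV) f"
    apply (rule integrableI_bounded) using fin nn by auto
  then have "Infinite_Set_Sum.abs_summable_on f UNIV" by (simp add: abs_summable_on_def)
  then have "Infinite_Sum.abs_summable_on f UNIV" using abs_summable_equivalent by blast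
  then show ?thesis using summable_on_iff_abs_summable_on_real by blast
qed

lemma ennreal_infsum_fin:
  fixes w :: "'a \<Rightarrow> real"
  assumes nn: "\<And>x. w x \<ge> 0" and fin: "(\<Sum>\<^sub>\<infinity>x\<in>UNIV. ennreal (w x)) < \<infinity>"
  shows "w summable_on UNIV"
proof (rule nonneg_bdd_above_summable_on)
  show "\<And>x. x \<in> UNIV \<Longrightarrow> 0 \<le> w x" using nn by auto
  let ?T = "(\<Sum>\<^sub>\<infinity>x\<in>UNIV. ennreal (w x))"
  have "sum w F \<le> enn2real ?T" if "finite F" for F
  proof -
    have "ennreal (sum w F) = (\<Sum>x\<in>F. ennreal (w x))" using nn by (simp add: sum_ennreal)
    also have "\<dots> \<le> ?T"
      using nonneg_infsum_complete[of UNIV "\<lambda>x. ennreal (w x)"] that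
      by (auto intro!: SUP_upper)
    finally have "ennreal (sum w F) \<le> ?T" .
    from enn2real_mono[OF this] show ?thesis using nn fin by (simp add: sum_nonneg top_unique)
  qed
  then show "bdd_above (sum w ` {F. F \<subseteq> UNIV \<and> finite F})"
    by (auto simp: bdd_above_def)
qed


definition cell :: "nat \<Rightarrow> real ^ 'n \<Rightarrow> int ^ 'n" where
  "cell n y = (\<chi> j. \<lfloor>2 ^ n * y $ j\<rfloor>)"

lemma grid_cube_iff:
  "y \<in> grid_cube n \<alpha> \<longleftrightarrow> (\<forall>j. real_of_int (\<alpha> $ j) / 2 ^ n \<le> y $ j \<and> y $ j \<le> (real_of_int (\<alpha> $ j) + 1) / 2 ^ n)"
proof -
  have "\<bar>y $ j - grid_pt n \<alpha> $ j\<bar> \<le> inverse (2 ^ n) / 2 \<longleftrightarrow>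
        (real_of_int (\<alpha> $ j) / 2 ^ n \<le> y $ j \<and> y $ j \<le> (real_of_int (\<alpha> $ j) + 1) / 2 ^ n)" for j
    by (auto simp: grid_pt_def abs_le_iff field_simps)
  then show ?thesis by (simp add: grid_cube_def)
qed

lemma grid_cube_cbox:
  "grid_cube n \<alpha> = cbox (\<chi> j. real_of_int (\<alpha> $ j) / 2 ^ n) (\<chi> j. (real_of_int (\<alpha> $ j) + 1) / 2 ^ n)"
  by (auto simp: grid_cube_iff mem_box_cart)

lemma compact_grid_cube: "compact (grid_cube n \<alpha>)"
  by (simp add: grid_cube_cbox)

lemma convex_grid_cube: "convex (grid_cube n \<alpha>)"
  by (simp add: grid_cube_cbox)

lemma cell_in_cube: "y \<in> grid_cube n (cell n y)"
proof -
  have "real_of_int \<lfloor>2 ^ n * y $ j\<rfloor> / 2 ^ n \<le> y $ j \<and> y $ j \<le> (real_of_int \<lfloor>2 ^ n * y $ j\<rfloor> + 1) / 2 ^ n" for j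
  proof -
    have a: "real_of_int \<lfloor>2 ^ n * y $ j\<rfloor> \<le> 2 ^ n * y $ j" by (rule of_int_floor_le)
    have b: "2 ^ n * y $ j \<le> real_of_int \<lfloor>2 ^ n * y $ j\<rfloor> + 1" by linarith
    show ?thesis using a b by (simp add: field_simps)
  qed
  then show ?thesis by (simp add: grid_cube_iff cell_def)
qed

lemma grid_pt_in_cube: "grid_pt n \<alpha> \<in> grid_cube n \<alpha>"
  by (simp add: grid_cube_def)

lemma cell_grid_pt: "cell n (grid_pt n \<alpha>) = \<alpha>"
proof -
  have "\<lfloor>2 ^ n * (inverse (2 ^ n) * (real_of_int (\<alpha> $ j) + 1 / 2))\<rfloor> = \<alpha> $ j" for j
  proof -
    have e: "2 ^ n * (inverse (2 ^ n) * (real_of_int (\<alpha> $ j) + 1 / 2)) = real_of_int (\<alpha> $ j) + 1/2"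
      by simp
    have f: "\<lfloor>real_of_int (\<alpha> $ j) + 1/2\<rfloor> = \<alpha> $ j"
      by (rule floor_unique) auto
    show ?thesis unfolding e f by (rule refl)
  qed
  then show ?thesis by (simp add: cell_def grid_pt_def vec_eq_iff)
qed

lemma floor_pow_le1: "\<lfloor>t\<rfloor> * 2 ^ k \<le> \<lfloor>2 ^ k * (t::real)\<rfloor>"
proof -
  have "real_of_int (\<lfloor>t\<rfloor> * 2 ^ k) \<le> 2 ^ k * t"
    using of_int_floor_le[of t] by (simp add: mult.commute)
  then show ?thesis by (simp add: le_floor_iff)
qed

lemma floor_pow_le2: "\<lfloor>2 ^ k * (t::real)\<rfloor> + 1 \<le> (\<lfloor>t\<rfloor> + 1) * 2 ^ k"
proof -
  have "2 ^ k * t < real_of_int ((\<lfloor>t\<rfloor> + 1) * 2 ^ k)"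
    using real_of_int_floor_add_one_gt[of t] by (simp add: mult.commute)
  then have "\<lfloor>2 ^ k * t\<rfloor> < (\<lfloor>t\<rfloor> + 1) * 2 ^ k" by (simp add: floor_less_iff)
  then show ?thesis by linarith
qed

lemma floor_pow_div: "\<lfloor>real_of_int \<lfloor>2 ^ k * (t::real)\<rfloor> / 2 ^ k\<rfloor> = \<lfloor>t\<rfloor>"
proof -
  have a: "real_of_int (\<lfloor>t\<rfloor> * 2 ^ k) \<le> real_of_int \<lfloor>2 ^ k * t\<rfloor>"
    using floor_pow_le1[of t k] by linarith
  have b: "real_of_int \<lfloor>2 ^ k * t\<rfloor> + 1 \<le> real_of_int ((\<lfloor>t\<rfloor> + 1) * 2 ^ k)"
    using floor_pow_le2[of k t] by linarith
  show ?thesis unfolding floor_eq_iff using a b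
    by (auto simp: field_simps)
qed

lemma cell_level: 
  assumes "m \<le> n"
  shows "cell m y $ j = \<lfloor>real_of_int (cell n y $ j) / 2 ^ (n - m)\<rfloor>"
proof -
  have "(2::real) ^ n = 2 ^ (n - m) * 2 ^ m" using assms by (simp flip: power_add)
  then have eq: "2 ^ n * y $ j = 2 ^ (n - m) * (2 ^ m * y $ j)" by simp
  have "cell n y $ j = \<lfloor>2 ^ (n - m) * (2 ^ m * y $ j)\<rfloor>"
    by (simp only: cell_def vec_lambda_beta eq)
  then show ?thesis using floor_pow_div[of "n - m" "2 ^ m * y $ j"] by (simp add: cell_def)
qed

lemma cell_det:
  assumes "m \<le> n" "cell n y = cell n y'"
  shows "cell m y = cell m y'"
  using assms cell_level[OF assms(1), of y] cell_level[OF assms(1), of y'] by (simp add: vec_eq_iff)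

lemma nest_1d:
  fixes u z :: real
  assumes mn: "m \<le> n" and z1: "real_of_int \<lfloor>2 ^ n * u\<rfloor> / 2 ^ n \<le> z" and z2: "z \<le> (real_of_int \<lfloor>2 ^ n * u\<rfloor> + 1) / 2 ^ n"
  shows "real_of_int \<lfloor>2 ^ m * u\<rfloor> / 2 ^ m \<le> z \<and> z \<le> (real_of_int \<lfloor>2 ^ m * u\<rfloor> + 1) / 2 ^ m"
proof -
  obtain k where n: "n = m + k" using mn le_Suc_ex by blast
  define t where "t = 2 ^ m * u"
  have e: "2 ^ n * u = 2 ^ k * t" unfolding n t_def by (simp add: power_add)
  have p: "(2::real) ^ n = 2 ^ k * 2 ^ m" unfolding n by (simp add: power_add)
  have a: "real_of_int \<lfloor>t\<rfloor> * 2 ^ k \<le> real_of_int \<lfloor>2 ^ k * t\<rfloor>"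
  proof -
    have "real_of_int (\<lfloor>t\<rfloor> * 2 ^ k) \<le> real_of_int \<lfloor>2 ^ k * t\<rfloor>"
      using floor_pow_le1[of t k] by (rule of_int_le_iff[THEN iffD2])
    then show ?thesis by simp
  qed
  have b: "real_of_int \<lfloor>2 ^ k * t\<rfloor> + 1 \<le> (real_of_int \<lfloor>t\<rfloor> + 1) * 2 ^ k"
  proof -
    have "real_of_int (\<lfloor>2 ^ k * t\<rfloor> + 1) \<le> real_of_int ((\<lfloor>t\<rfloor> + 1) * 2 ^ k)"
      using floor_pow_le2[of k t] by (rule of_int_le_iff[THEN iffD2])
    then show ?thesis by simp
  qed
  have "real_of_int \<lfloor>t\<rfloor> / 2 ^ m = real_of_int \<lfloor>t\<rfloor> * 2 ^ k / 2 ^ n" by (simp add: p)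
  also have "\<dots> \<le> real_of_int \<lfloor>2 ^ k * t\<rfloor> / 2 ^ n" using a by (simp add: divide_right_mono)
  finally have 1: "real_of_int \<lfloor>t\<rfloor> / 2 ^ m \<le> z" using z1 unfolding e by linarith
  have "(real_of_int \<lfloor>2 ^ k * t\<rfloor> + 1) / 2 ^ n \<le> (real_of_int \<lfloor>t\<rfloor> + 1) * 2 ^ k / 2 ^ n"
    using b by (simp add: divide_right_mono)
  also have "\<dots> = (real_of_int \<lfloor>t\<rfloor> + 1) / 2 ^ m" by (simp add: p)
  finally have 2: "z \<le> (real_of_int \<lfloor>t\<rfloor> + 1) / 2 ^ m" using z2 unfolding e by linarith
  show ?thesis using 1 2 unfolding t_def by simp
qed

lemma cube_nest:
  assumes "m \<le> n"
  shows "grid_cube n (cell n y) \<subseteq> grid_cube m (cell m y)"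
proof
  fix z assume z: "z \<in> grid_cube n (cell n y)"
  have "real_of_int (cell m y $ j) / 2 ^ m \<le> z $ j \<and> z $ j \<le> (real_of_int (cell m y $ j) + 1) / 2 ^ m" for j
  proof -
    have "real_of_int (cell n y $ j) / 2 ^ n \<le> z $ j \<and> z $ j \<le> (real_of_int (cell n y $ j) + 1) / 2 ^ n"
      using z unfolding grid_cube_iff by blast
    then have "real_of_int \<lfloor>2 ^ n * y $ j\<rfloor> / 2 ^ n \<le> z $ j \<and> z $ j \<le> (real_of_int \<lfloor>2 ^ n * y $ j\<rfloor> + 1) / 2 ^ n"
      by (simp add: cell_def)
    then have "real_of_int \<lfloor>2 ^ m * y $ j\<rfloor> / 2 ^ m \<le> z $ j \<and> z $ j \<le> (real_of_int \<lfloor>2 ^ m * y $ j\<rfloor> + 1) / 2 ^ m"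
      using nest_1d[OF assms] by blast
    then show ?thesis by (simp add: cell_def)
  qed
  then show "z \<in> grid_cube m (cell m y)" by (simp add: grid_cube_iff)
qed

lemma cube_diam:
  fixes x y :: "real ^ 'n"
  assumes "x \<in> grid_cube n \<alpha>" "y \<in> grid_cube n \<alpha>"
  shows "norm (x - y) \<le> real CARD('n) * inverse (2 ^ n)"
proof -
  have hj: "\<bar>(x - y) $ j\<bar> \<le> inverse (2 ^ n)" for j
  proof -
    have "real_of_int (\<alpha> $ j) / 2 ^ n \<le> x $ j \<and> x $ j \<le> (real_of_int (\<alpha> $ j) + 1) / 2 ^ n"
         "real_of_int (\<alpha> $ j) / 2 ^ n \<le> y $ j \<and> y $ j \<le> (real_of_int (\<alpha> $ j) + 1) / 2 ^ n"
      using assms unfolding grid_cube_iff by blast+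
    moreover have "(real_of_int (\<alpha> $ j) + 1) / 2 ^ n = real_of_int (\<alpha> $ j) / 2 ^ n + inverse (2 ^ n)"
      by (simp add: field_simps)
    ultimately show ?thesis by (simp add: abs_le_iff)
  qed
  have "(\<Sum>j\<in>UNIV. \<bar>(x - y) $ j\<bar>) \<le> (\<Sum>j\<in>(UNIV::'n set). inverse (2 ^ n))"
    by (rule sum_mono) (rule hj)
  then show ?thesis using norm_le_l1_cart[of "x - y"] by simp
qed

lemma comp_le_frob: "\<bar>A $ i $ j\<bar> \<le> frob A"
proof -
  have "(A $ i $ j)\<^sup>2 \<le> (\<Sum>k\<in>UNIV. (A $ i $ k)\<^sup>2)"
    by (rule member_le_sum) auto
  also have "\<dots> \<le> (\<Sum>j\<in>UNIV. \<Sum>k\<in>UNIV. (A $ j $ k)\<^sup>2)"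
    by (rule member_le_sum[where f="\<lambda>j. \<Sum>k\<in>UNIV. (A $ j $ k)\<^sup>2"]) (auto intro: sum_nonneg)
  finally have "sqrt ((A $ i $ j)\<^sup>2) \<le> frob A" unfolding frob_def by (rule real_sqrt_le_mono)
  then show ?thesis by simp
qed

lemma frob_nonneg: "0 \<le> frob A"
  by (simp add: frob_def sum_nonneg)

lemma onorm_frob: "onorm ((*v) A) \<le> real CARD('n) ^ 2 * frob (A :: real^'n^'n)"
proof -
  have "onorm ((*v) A) \<le> (\<Sum>i\<in>UNIV. \<Sum>j\<in>UNIV. \<bar>A $ i $ j\<bar>)" by (rule onorm_le_matrix_component_sum)
  also have "\<dots> \<le> (\<Sum>i\<in>(UNIV::'n set). \<Sum>j\<in>(UNIV::'n set). frob A)"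
    by (intro sum_mono comp_le_frob)
  also have "\<dots> = real CARD('n) ^ 2 * frob A" by (simp add: power2_eq_square)
  finally show ?thesis .
qed


lemma frob_norm: "frob A = norm A"
  by (simp add: frob_def norm_vec_def L2_set_def sum_nonneg)

definition Mx :: "(real ^ 'n \<Rightarrow> real ^ 'n ^ 'n) \<Rightarrow> nat \<Rightarrow> int ^ 'n \<Rightarrow> real" where
  "Mx Hs n \<alpha> = (SUP x\<in>grid_cube n \<alpha>. frob (Hs x))"

context
  fixes g :: "real ^ 'n \<Rightarrow> real ^ 'n" and Hs :: "real ^ 'n \<Rightarrow> real ^ 'n ^ 'n"
  assumes hess: "\<And>x. (g has_derivative (\<lambda>h. Hs x *v h)) (at x)"
    and hess_cont: "continuous_on UNIV Hs"
begin

lemma frob_cont: "continuous_on A (\<lambda>x. frob (Hs x))"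
  unfolding frob_norm
  by (intro continuous_on_norm continuous_on_subset[OF hess_cont]) auto

lemma Mx_bdd: "bdd_above ((\<lambda>x. frob (Hs x)) ` grid_cube n \<alpha>)"
  by (intro bounded_imp_bdd_above compact_imp_bounded compact_continuous_image frob_cont compact_grid_cube)

lemma Mx_ge: "x \<in> grid_cube n \<alpha> \<Longrightarrow> frob (Hs x) \<le> Mx Hs n \<alpha>"
  unfolding Mx_def by (rule cSUP_upper[OF _ Mx_bdd])

lemma Mx_nonneg: "0 \<le> Mx Hs n \<alpha>"
  using Mx_ge[OF grid_pt_in_cube] frob_nonneg order_trans by blast

lemma Mx_mono: "m \<le> n \<Longrightarrow> Mx Hs n (cell n y) \<le> Mx Hs m (cell m y)"
  unfolding Mx_def
  by (rule cSUP_subset_mono[OF _ Mx_bdd cube_nest]) (use cell_in_cube in auto)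

lemma lip_cube:
  assumes "x \<in> grid_cube n \<alpha>" "y \<in> grid_cube n \<alpha>"
  shows "norm (g x - g y) \<le> (real CARD('n) ^ 2 * Mx Hs n \<alpha>) * norm (x - y)"
proof (rule differentiable_bound[OF convex_grid_cube _ _ assms])
  fix z assume "z \<in> grid_cube n \<alpha>"
  show "(g has_derivative (\<lambda>h. Hs z *v h)) (at z within grid_cube n \<alpha>)"
    by (rule has_derivative_at_withinI[OF hess])
  have "onorm (\<lambda>h. Hs z *v h) \<le> real CARD('n) ^ 2 * frob (Hs z)"
    using onorm_frob[of "Hs z"] by simp
  also have "\<dots> \<le> real CARD('n) ^ 2 * Mx Hs n \<alpha>"
    using Mx_ge[OF \<open>z \<in> grid_cube n \<alpha>\<close>] by (simp add: mult_left_mono)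
  finally show "onorm (\<lambda>h. Hs z *v h) \<le> real CARD('n) ^ 2 * Mx Hs n \<alpha>" .
qed

lemma key_pt:
  assumes "y \<in> grid_cube n \<alpha>"
  shows "\<bar>norm (g (grid_pt n \<alpha>)) - norm (g y)\<bar> \<le> real CARD('n) ^ 3 * inverse (2 ^ n) * Mx Hs n \<alpha>"
proof -
  have "\<bar>norm (g (grid_pt n \<alpha>)) - norm (g y)\<bar> \<le> norm (g (grid_pt n \<alpha>) - g y)"
    by (rule norm_triangle_ineq3)
  also have "\<dots> \<le> (real CARD('n) ^ 2 * Mx Hs n \<alpha>) * norm (grid_pt n \<alpha> - y)"
    by (rule lip_cube[OF grid_pt_in_cube assms])
  also have "\<dots> \<le> (real CARD('n) ^ 2 * Mx Hs n \<alpha>) * (real CARD('n) * inverse (2 ^ n))"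
    by (intro mult_left_mono cube_diam[OF grid_pt_in_cube assms]) (simp add: Mx_nonneg)
  also have "\<dots> = real CARD('n) ^ 3 * inverse (2 ^ n) * Mx Hs n \<alpha>"
    by (simp add: power_numeral_reduce)
  finally show ?thesis .
qed

end


definition Qc :: "nat \<Rightarrow> int ^ 'n \<Rightarrow> (real ^ 'n) set" where
  "Qc n \<alpha> = {y. cell n y = \<alpha>}"

lemma floor_iff_div: "\<lfloor>2 ^ n * (t::real)\<rfloor> = a \<longleftrightarrow> real_of_int a / 2 ^ n \<le> t \<and> t < (real_of_int a + 1) / 2 ^ n"
proof -
  have "\<lfloor>2 ^ n * t\<rfloor> = a \<longleftrightarrow> real_of_int a \<le> 2 ^ n * t \<and> 2 ^ n * t < real_of_int a + 1"
    by (rule floor_eq_iff)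
  also have "\<dots> \<longleftrightarrow> real_of_int a / 2 ^ n \<le> t \<and> t < (real_of_int a + 1) / 2 ^ n"
    by (simp add: divide_le_eq less_divide_eq mult.commute)
  finally show ?thesis .
qed

lemma Qc_eq: "Qc n \<alpha> = (\<Inter>j\<in>UNIV. {y. real_of_int (\<alpha> $ j) / 2 ^ n \<le> y $ j} \<inter> {y. y $ j < (real_of_int (\<alpha> $ j) + 1) / 2 ^ n})"
  by (auto simp: Qc_def cell_def vec_eq_iff floor_iff_div)

lemma Qc_sets[measurable]: "Qc n \<alpha> \<in> sets lborel"
  unfolding Qc_eq sets_lborel
  by (intro sets.finite_INT sets.Int borel_closed borel_open closed_halfspace_component_ge_cart
      open_halfspace_component_lt_cart) auto

lemma in_Qc: "y \<in> Qc n (cell n y)"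
  by (simp add: Qc_def)

lemma Qc_cube: "Qc n \<alpha> \<subseteq> grid_cube n \<alpha>"
  using cell_in_cube by (auto simp: Qc_def)

lemma emeasure_Qc:
  fixes \<alpha> :: "int ^ 'n"
  shows "emeasure lborel (Qc n \<alpha>) = ennreal (inverse (2 ^ n) ^ CARD('n))"
proof -
  define l where "l = (\<chi> j. real_of_int (\<alpha> $ j) / 2 ^ n)"
  define u where "u = (\<chi> j. (real_of_int (\<alpha> $ j) + 1) / 2 ^ n)"
  have ub: "(u - l) \<bullet> b = inverse (2 ^ n)" if hb: "b \<in> Basis" for b
  proof -
    obtain i where b: "b = axis i 1" using hb unfolding Basis_vec_def Basis_real_def by blast
    show ?thesis by (simp add: b inner_axis l_def u_def field_simps)
  qed
  have cond: "\<forall>b\<in>Basis. l \<bullet> b \<le> u \<bullet> b"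
  proof
    fix b :: "real ^ 'n" assume "b \<in> Basis"
    then have "u \<bullet> b - l \<bullet> b = inverse (2 ^ n)" using ub by (simp add: inner_diff_left)
    then show "l \<bullet> b \<le> u \<bullet> b" by (simp add: algebra_simps)
  qed
  have pr: "prod ((\<bullet>) (u - l)) Basis = inverse (2 ^ n) ^ CARD('n)"
  proof -
    have "prod ((\<bullet>) (u - l)) Basis = (\<Prod>b\<in>(Basis :: (real ^ 'n::finite) set). inverse (2 ^ n))"
      by (rule prod.cong[OF refl]) (rule ub)
    also have "\<dots> = inverse (2 ^ n) ^ CARD('n)"
      by (simp add: prod_constant)
    finally show ?thesis .
  qed
  have sub1: "box l u \<subseteq> Qc n \<alpha>"
  proof
    fix x assume "x \<in> box l u"
    then have h: "\<And>i. l $ i < x $ i \<and> x $ i < u $ i" by (simp add: mem_box_cart)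
    have "real_of_int (\<alpha> $ j) / 2 ^ n \<le> x $ j \<and> x $ j < (real_of_int (\<alpha> $ j) + 1) / 2 ^ n" for j
      using h[of j] by (simp add: l_def u_def)
    then show "x \<in> Qc n \<alpha>" by (simp add: Qc_eq)
  qed
  have sub2: "Qc n \<alpha> \<subseteq> cbox l u"
  proof
    fix x assume "x \<in> Qc n \<alpha>"
    then have h: "\<And>j. real_of_int (\<alpha> $ j) / 2 ^ n \<le> x $ j \<and> x $ j < (real_of_int (\<alpha> $ j) + 1) / 2 ^ n"
      by (simp add: Qc_eq)
    have "l $ i \<le> x $ i \<and> x $ i \<le> u $ i" for i
      using h[of i] by (simp add: l_def u_def)
    then show "x \<in> cbox l u" by (simp add: mem_box_cart)
  qed
  have e1: "emeasure lborel (box l u) = ennreal (inverse (2 ^ n) ^ CARD('n))"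
    using cond pr by (simp add: emeasure_lborel_box_eq)
  have e2: "emeasure lborel (cbox l u) = ennreal (inverse (2 ^ n) ^ CARD('n))"
    using cond pr by (simp add: emeasure_lborel_cbox_eq)
  have "emeasure lborel (box l u) \<le> emeasure lborel (Qc n \<alpha>)"
    by (rule emeasure_mono[OF sub1 Qc_sets])
  moreover have "emeasure lborel (Qc n \<alpha>) \<le> emeasure lborel (cbox l u)"
    by (rule emeasure_mono[OF sub2]) simp
  ultimately show ?thesis using e1 e2 by (simp add: antisym)
qed

lemma cell_measurable: "cell n \<in> lborel \<rightarrow>\<^sub>M count_space UNIV"
  unfolding measurable_count_space_eq2_countable
proof (intro conjI ballI)
  show "cell n \<in> space lborel \<rightarrow> UNIV" by simp
  fix a :: "int ^ 'n"
  have pre: "cell n -` {a} \<inter> space lborel = Qc n a" by (auto simp: Qc_def)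
  show "cell n -` {a} \<inter> space lborel \<in> sets lborel" unfolding pre by (rule Qc_sets)
qed

lemma TD:
  fixes F :: "real ^ 'n \<Rightarrow> ennreal"
  assumes [measurable]: "F \<in> borel_measurable lborel"
  shows "(\<integral>\<^sup>+y. F y \<partial>lborel) = (\<integral>\<^sup>+\<alpha>. (\<integral>\<^sup>+y. F y * indicator (Qc n \<alpha>) y \<partial>lborel) \<partial>count_space UNIV)"
proof -
  have pt: "F y = (\<integral>\<^sup>+\<alpha>. F y * indicator (Qc n \<alpha>) y \<partial>count_space UNIV)" for y
  proof -
    have "(\<integral>\<^sup>+\<alpha>. F y * indicator (Qc n \<alpha>) y \<partial>count_space UNIV) = (\<Sum>\<alpha>\<in>{cell n y}. F y * indicator (Qc n \<alpha>) y)"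
      by (rule nn_integral_count_space') (auto simp: Qc_def)
    also have "\<dots> = F y" by (simp add: in_Qc)
    finally show ?thesis by simp
  qed
  have "(\<integral>\<^sup>+y. F y \<partial>lborel) = (\<integral>\<^sup>+y. (\<integral>\<^sup>+\<alpha>. F y * indicator (Qc n \<alpha>) y \<partial>count_space UNIV) \<partial>lborel)"
    by (subst pt) (rule refl)
  also have "\<dots> = (\<integral>\<^sup>+\<alpha>. (\<integral>\<^sup>+y. F y * indicator (Qc n \<alpha>) y \<partial>lborel) \<partial>count_space UNIV)"
    by (rule nn_integral_count_space_nn_integral) auto
  finally show ?thesis .
qed

lemma step_integral:
  fixes w :: "int ^ 'n \<Rightarrow> real"
  assumes nn: "\<And>\<alpha>. 0 \<le> w \<alpha>"
  shows "(\<integral>\<^sup>+y. ennreal (w (cell n y)) \<partial>lborel) = (\<integral>\<^sup>+\<alpha>. ennreal (inverse (2 ^ (n * CARD('n))) * w \<alpha>) \<partial>count_space UNIV)"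
proof -
  have m: "(\<lambda>y. ennreal (w (cell n y))) \<in> borel_measurable lborel"
    by (rule measurable_compose[OF cell_measurable]) simp
  have "(\<integral>\<^sup>+y. ennreal (w (cell n y)) \<partial>lborel) = (\<integral>\<^sup>+\<alpha>. (\<integral>\<^sup>+y. ennreal (w (cell n y)) * indicator (Qc n \<alpha>) y \<partial>lborel) \<partial>count_space UNIV)"
    by (rule TD[OF m])
  also have "\<dots> = (\<integral>\<^sup>+\<alpha>. ennreal (inverse (2 ^ (n * CARD('n))) * w \<alpha>) \<partial>count_space UNIV)"
  proof (rule nn_integral_cong)
    fix \<alpha> :: "int ^ 'n"
    have "(\<integral>\<^sup>+y. ennreal (w (cell n y)) * indicator (Qc n \<alpha>) y \<partial>lborel) = (\<integral>\<^sup>+y. ennreal (w \<alpha>) * indicator (Qc n \<alpha>) y \<partial>lborel)"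
      by (rule nn_integral_cong) (auto simp: Qc_def indicator_def)
    also have "\<dots> = ennreal (w \<alpha>) * emeasure lborel (Qc n \<alpha>)"
      by (rule nn_integral_cmult_indicator[OF Qc_sets])
    also have "\<dots> = ennreal (w \<alpha>) * ennreal (inverse (2 ^ (n * CARD('n))))"
      by (simp add: emeasure_Qc power_mult power_inverse)
    also have "\<dots> = ennreal (inverse (2 ^ (n * CARD('n))) * w \<alpha>)"
      by (simp add: ennreal_mult'' nn mult.commute)
    finally show "(\<integral>\<^sup>+y. ennreal (w (cell n y)) * indicator (Qc n \<alpha>) y \<partial>lborel) = ennreal (inverse (2 ^ (n * CARD('n))) * w \<alpha>)" .
  qed
  finally show ?thesis .
qed


lemma ennreal_lt_top_iff_ne: "(x::ennreal) < \<infinity> \<longleftrightarrow> x \<noteq> \<infinity>"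
  by (simp add: less_top)

context
  fixes g :: "real ^ 'n \<Rightarrow> real ^ 'n" and Hs :: "real ^ 'n \<Rightarrow> real ^ 'n ^ 'n"
  assumes hess: "\<And>x. (g has_derivative (\<lambda>h. Hs x *v h)) (at x)"
    and hess_cont: "continuous_on UNIV Hs"
    and grad_int: "integrable lborel (\<lambda>x. norm (g x))"
begin

lemma E_meas: "(\<lambda>y. Mx Hs n (cell n y)) \<in> borel_measurable lborel"
  by (rule measurable_compose[OF cell_measurable]) simp

lemma A_meas: "(\<lambda>y. norm (g (grid_pt n (cell n y)))) \<in> borel_measurable lborel"
  by (rule measurable_compose[OF cell_measurable]) simp

lemma E_integrable:
  assumes fin: "(\<integral>\<^sup>+y. ennreal (Mx Hs n (cell n y)) \<partial>lborel) < \<infinity>"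
  shows "integrable lborel (\<lambda>y. Mx Hs n (cell n y))"
  by (rule integrableI_nonneg[OF E_meas]) (use fin Mx_nonneg[OF hess hess_cont] in auto)

lemma level:
  assumes fin: "(\<integral>\<^sup>+y. ennreal (Mx Hs n (cell n y)) \<partial>lborel) < \<infinity>"
  shows "(\<lambda>\<alpha>::int ^ 'n. inverse (2 ^ (n * CARD('n))) * norm (g (grid_pt n \<alpha>))) summable_on UNIV"
    and "\<bar>(\<Sum>\<^sub>\<infinity>\<alpha>\<in>(UNIV :: (int ^ 'n) set). inverse (2 ^ (n * CARD('n))) * norm (g (grid_pt n \<alpha>)))
              - (\<integral>x. norm (g x) \<partial>lborel)\<bar>
           \<le> real CARD('n) ^ 3 * inverse (2 ^ n) * (\<integral>y. Mx Hs n (cell n y) \<partial>lborel)"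
proof -
  let ?c = "real CARD('n) ^ 3 * inverse (2 ^ n)"
  let ?E = "\<lambda>y. Mx Hs n (cell n y)"
  let ?A = "\<lambda>y. norm (g (grid_pt n (cell n y)))"
  let ?w = "\<lambda>\<alpha>::int ^ 'n. inverse (2 ^ (n * CARD('n))) * norm (g (grid_pt n \<alpha>))"
  have Eint: "integrable lborel ?E" by (rule E_integrable[OF fin])
  have pt: "\<bar>?A y - norm (g y)\<bar> \<le> ?c * ?E y" for y
    using key_pt[OF hess hess_cont cell_in_cube[of y n]] by simp
  have Bint: "integrable lborel (\<lambda>y. norm (g y) + ?c * ?E y)"
    by (intro Bochner_Integration.integrable_add grad_int integrable_mult_right Eint)
  have Aint: "integrable lborel ?A"
  proof (rule Bochner_Integration.integrable_bound[OF Bint A_meas])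
    show "AE x in lborel. norm (?A x) \<le> norm (norm (g x) + ?c * ?E x)"
    proof (rule AE_I2)
      fix x
      have "?A x \<le> norm (g x) + ?c * ?E x" using pt[of x] by linarith
      moreover have "0 \<le> ?c * ?E x" using Mx_nonneg[OF hess hess_cont] by simp
      ultimately show "norm (?A x) \<le> norm (norm (g x) + ?c * ?E x)" by simp
    qed
  qed
  have Afin: "(\<integral>\<^sup>+y. ennreal (?A y) \<partial>lborel) < \<infinity>"
    using integrableD(2)[OF Aint] by (simp add: less_top)
  have step: "(\<integral>\<^sup>+y. ennreal (?A y) \<partial>lborel) = (\<integral>\<^sup>+\<alpha>. ennreal (?w \<alpha>) \<partial>count_space UNIV)"
    by (rule step_integral) simp
  have wnn: "\<And>\<alpha>. 0 \<le> ?w \<alpha>" by simp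
  have cfin: "(\<integral>\<^sup>+\<alpha>. ennreal (?w \<alpha>) \<partial>count_space UNIV) < \<infinity>" using Afin step by simp
  show sm: "?w summable_on UNIV" by (rule infsum_from_cs[OF wnn cfin])
  have "(\<integral>y. ?A y \<partial>lborel) = enn2real (\<integral>\<^sup>+y. ennreal (?A y) \<partial>lborel)"
    by (rule integral_eq_nn_integral[OF A_meas]) simp
  also have "\<dots> = enn2real (ennreal (infsum ?w UNIV))"
    unfolding step cs_to_infsum[OF wnn sm] ..
  also have "\<dots> = infsum ?w UNIV" by (simp add: infsum_nonneg)
  finally have intA: "(\<integral>y. ?A y \<partial>lborel) = infsum ?w UNIV" .
  have "infsum ?w UNIV - (\<integral>x. norm (g x) \<partial>lborel) = (\<integral>y. ?A y - norm (g y) \<partial>lborel)"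
    unfolding intA[symmetric] by (rule Bochner_Integration.integral_diff[OF Aint grad_int, symmetric])
  also have "\<bar>\<dots>\<bar> \<le> (\<integral>y. ?c * ?E y \<partial>lborel)"
    by (rule integral_abs_bound_integral) (use Aint grad_int Eint pt in auto)
  also have "\<dots> = ?c * (\<integral>y. ?E y \<partial>lborel)"
    by (rule Bochner_Integration.integral_mult_right) (rule Eint)
  finally show "\<bar>infsum ?w UNIV - (\<integral>x. norm (g x) \<partial>lborel)\<bar> \<le> ?c * (\<integral>y. ?E y \<partial>lborel)" .
qed


lemma Hfin_E:
  assumes "Hn m Hs < \<infinity>"
  shows "(\<integral>\<^sup>+y. ennreal (Mx Hs m (cell m y)) \<partial>lborel) < \<infinity>"
    and "(\<lambda>\<alpha>::int ^ 'n. inverse (2 ^ (m * CARD('n))) * Mx Hs m \<alpha>) summable_on UNIV"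
proof -
  let ?w = "\<lambda>\<alpha>::int ^ 'n. inverse (2 ^ (m * CARD('n))) * Mx Hs m \<alpha>"
  have wnn: "\<And>\<alpha>. 0 \<le> ?w \<alpha>" using Mx_nonneg[OF hess hess_cont] by simp
  have "(\<Sum>\<^sub>\<infinity>\<alpha>\<in>UNIV. ennreal (?w \<alpha>)) = Hn m Hs" by (simp add: Hn_def Mx_def)
  then have fin: "(\<Sum>\<^sub>\<infinity>\<alpha>\<in>UNIV. ennreal (?w \<alpha>)) < \<infinity>" using assms by simp
  show sm: "?w summable_on UNIV" by (rule ennreal_infsum_fin[OF wnn fin])
  have "(\<integral>\<^sup>+y. ennreal (Mx Hs m (cell m y)) \<partial>lborel) = (\<integral>\<^sup>+\<alpha>. ennreal (?w \<alpha>) \<partial>count_space UNIV)"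
    by (rule step_integral) (rule Mx_nonneg[OF hess hess_cont])
  also have "\<dots> = ennreal (infsum ?w UNIV)" by (rule cs_to_infsum[OF wnn sm])
  finally show "(\<integral>\<^sup>+y. ennreal (Mx Hs m (cell m y)) \<partial>lborel) < \<infinity>" by simp
qed

lemma E_mono_nn:
  assumes "m \<le> n"
  shows "(\<integral>\<^sup>+y. ennreal (Mx Hs n (cell n y)) \<partial>lborel) \<le> (\<integral>\<^sup>+y. ennreal (Mx Hs m (cell m y)) \<partial>lborel)"
  by (intro nn_integral_mono ennreal_leI Mx_mono[OF hess hess_cont assms])

lemma E_mono_int:
  assumes "m \<le> n" "(\<integral>\<^sup>+y. ennreal (Mx Hs m (cell m y)) \<partial>lborel) < \<infinity>"
  shows "(\<integral>y. Mx Hs n (cell n y) \<partial>lborel) \<le> (\<integral>y. Mx Hs m (cell m y) \<partial>lborel)"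
proof -
  have fn: "(\<integral>\<^sup>+y. ennreal (Mx Hs n (cell n y)) \<partial>lborel) < \<infinity>"
    using E_mono_nn[OF assms(1)] assms(2) by (rule le_less_trans)
  show ?thesis
    by (rule integral_mono[OF E_integrable[OF fn] E_integrable[OF assms(2)] Mx_mono[OF hess hess_cont assms(1)]])
qed

lemma frob_integrable:
  assumes "(\<integral>\<^sup>+y. ennreal (Mx Hs m (cell m y)) \<partial>lborel) < \<infinity>"
  shows "integrable lborel (\<lambda>x. frob (Hs x))"
proof (rule Bochner_Integration.integrable_bound[OF E_integrable[OF assms]])
  show "(\<lambda>x. frob (Hs x)) \<in> borel_measurable lborel"
    by (simp add: borel_measurable_continuous_onI frob_cont[OF hess hess_cont])
  show "AE x in lborel. norm (frob (Hs x)) \<le> norm (Mx Hs m (cell m x))"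
  proof (rule AE_I2)
    fix x
    have "frob (Hs x) \<le> Mx Hs m (cell m x)" by (rule Mx_ge[OF hess hess_cont cell_in_cube])
    then show "norm (frob (Hs x)) \<le> norm (Mx Hs m (cell m x))" using frob_nonneg[of "Hs x"] by simp
  qed
qed

lemma small_summable:
  assumes nm: "n \<le> m"
    and s1: "(\<lambda>\<beta>::int ^ 'n. inverse (2 ^ (m * CARD('n))) * norm (g (grid_pt m \<beta>))) summable_on UNIV"
    and s2: "(\<lambda>\<beta>::int ^ 'n. inverse (2 ^ (m * CARD('n))) * Mx Hs m \<beta>) summable_on UNIV"
  shows "(\<lambda>\<alpha>::int ^ 'n. inverse (2 ^ (n * CARD('n))) * norm (g (grid_pt n \<alpha>))) summable_on UNIV"
proof -
  let ?s = "real CARD('n)"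
  define bt where "bt = (\<lambda>\<alpha>::int ^ 'n. cell m (grid_pt n \<alpha>))"
  define v where "v = (\<lambda>\<beta>::int ^ 'n. inverse (2 ^ (m * CARD('n))) * norm (g (grid_pt m \<beta>))
                     + ?s ^ 3 * (inverse (2 ^ (m * CARD('n))) * Mx Hs m \<beta>))"
  define K :: real where "K = 2 ^ ((m - n) * CARD('n))"
  have inj: "inj_on bt UNIV"
  proof (rule inj_onI)
    fix a b assume "bt a = bt b"
    then have "cell n (grid_pt n a) = cell n (grid_pt n b)"
      unfolding bt_def by (rule cell_det[OF nm])
    then show "a = b" by (simp add: cell_grid_pt)
  qed
  have vs: "v summable_on UNIV"
    unfolding v_def by (intro summable_on_add s1 summable_on_cmult_right s2)
  have "v summable_on (bt ` UNIV)" by (rule summable_on_subset_banach[OF vs]) simp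
  then have "(v \<circ> bt) summable_on UNIV" using summable_on_reindex[OF inj] by blast
  then have ks: "(\<lambda>\<alpha>. K * (v \<circ> bt) \<alpha>) summable_on UNIV" by (rule summable_on_cmult_right)
  have pw: "inverse (2 ^ (n * CARD('n))) * norm (g (grid_pt n \<alpha>)) \<le> K * (v \<circ> bt) \<alpha>" for \<alpha>
  proof -
    let ?y = "grid_pt n \<alpha>"
    have "\<bar>norm (g (grid_pt m (bt \<alpha>))) - norm (g ?y)\<bar> \<le> ?s ^ 3 * inverse (2 ^ m) * Mx Hs m (bt \<alpha>)"
      unfolding bt_def by (rule key_pt[OF hess hess_cont cell_in_cube])
    moreover have "?s ^ 3 * inverse (2 ^ m) * Mx Hs m (bt \<alpha>) \<le> ?s ^ 3 * Mx Hs m (bt \<alpha>)"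
    proof -
      have "inverse ((2::real) ^ m) \<le> 1" by (simp add: inverse_le_1_iff)
      then have "inverse (2 ^ m) * Mx Hs m (bt \<alpha>) \<le> 1 * Mx Hs m (bt \<alpha>)"
        by (intro mult_right_mono Mx_nonneg[OF hess hess_cont])
      then show ?thesis by (simp add: mult.assoc mult_left_mono)
    qed
    ultimately have N: "norm (g ?y) \<le> norm (g (grid_pt m (bt \<alpha>))) + ?s ^ 3 * Mx Hs m (bt \<alpha>)" by linarith
    have e: "(m - n) * CARD('n) + n * CARD('n) = m * CARD('n)"
      using nm by (simp add: add_mult_distrib[symmetric])
    have p: "(2::real) ^ (m * CARD('n)) = K * 2 ^ (n * CARD('n))"
      unfolding K_def e[symmetric] by (simp add: power_add)
    have Kpos: "0 < K" by (simp add: K_def)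
    have "inverse (2 ^ (n * CARD('n))) * norm (g ?y)
          \<le> inverse (2 ^ (n * CARD('n))) * (norm (g (grid_pt m (bt \<alpha>))) + ?s ^ 3 * Mx Hs m (bt \<alpha>))"
      using N by (simp add: mult_left_mono)
    also have "\<dots> = K * (inverse (2 ^ (m * CARD('n))) * (norm (g (grid_pt m (bt \<alpha>))) + ?s ^ 3 * Mx Hs m (bt \<alpha>)))"
      unfolding p using Kpos by (simp add: field_simps)
    also have "\<dots> = K * (v \<circ> bt) \<alpha>" by (simp add: v_def algebra_simps)
    finally show ?thesis .
  qed
  show ?thesis
    by (rule summable_on_comparison_test[OF ks]) (use pw in auto)
qed

lemma zero_case:
  assumes I0: "(\<integral>x. frob (Hs x) \<partial>lborel) = 0" and fint: "integrable lborel (\<lambda>x. frob (Hs x))"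
  shows "g x = 0"
proof -
  let ?s = "real CARD('n)"
  have spos: "0 < ?s" by simp
  have nn0: "(\<integral>\<^sup>+y. ennreal (frob (Hs y)) \<partial>lborel) = 0"
  proof -
    have "(\<integral>x. frob (Hs x) \<partial>lborel) = enn2real (\<integral>\<^sup>+y. ennreal (frob (Hs y)) \<partial>lborel)"
      by (rule integral_eq_nn_integral) (use fint frob_nonneg in auto)
    moreover have "(\<integral>\<^sup>+y. ennreal (frob (Hs y)) \<partial>lborel) \<noteq> \<infinity>" using integrableD(2)[OF fint] by simp
    ultimately show ?thesis using I0 enn2real_eq_0_iff by (simp add: top_ennreal_def)
  qed
  have H0: "Hs x = 0" for x
  proof (rule ccontr)
    assume "Hs x \<noteq> 0"
    then have cpos: "0 < frob (Hs x)" by (simp add: frob_norm)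
    let ?c = "frob (Hs x)"
    have "\<forall>e>0. \<exists>d>0. \<forall>x'\<in>UNIV. dist x' x < d \<longrightarrow> dist (frob (Hs x')) ?c < e"
      using frob_cont[OF hess hess_cont, of UNIV] unfolding continuous_on_iff by blast
    then obtain d where d: "d > 0" and dd: "\<And>x'. dist x' x < d \<Longrightarrow> dist (frob (Hs x')) ?c < ?c / 2"
      using cpos by (meson UNIV_I half_gt_zero)
    obtain n where n: "(1/2::real) ^ n < d / ?s"
      using real_arch_pow_inv[of "d / ?s" "1/2"] d spos by auto
    have diam: "?s * inverse (2 ^ n) < d"
      using n spos by (simp add: power_one_over field_simps)
    let ?Q = "Qc n (cell n x)"
    have big: "?c / 2 < frob (Hs y)" if "y \<in> ?Q" for y
    proof -
      have "y \<in> grid_cube n (cell n x)" using Qc_cube that by blast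
      then have "norm (y - x) \<le> ?s * inverse (2 ^ n)" by (rule cube_diam[OF _ cell_in_cube])
      then have "dist y x < d" using diam by (simp add: dist_norm)
      then have "\<bar>frob (Hs y) - ?c\<bar> < ?c / 2" using dd by (simp add: dist_real_def)
      then show ?thesis by linarith
    qed
    have "ennreal (?c / 2) * emeasure lborel ?Q = (\<integral>\<^sup>+y. ennreal (?c / 2) * indicator ?Q y \<partial>lborel)"
      by (rule nn_integral_cmult_indicator[OF Qc_sets, symmetric])
    also have "\<dots> \<le> (\<integral>\<^sup>+y. ennreal (frob (Hs y)) \<partial>lborel)"
    proof (rule nn_integral_mono)
      fix y
      show "ennreal (?c / 2) * indicator ?Q y \<le> ennreal (frob (Hs y))"
      proof (cases "y \<in> ?Q")
        case True then show ?thesis using big[OF True] by (simp add: ennreal_leI)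
      next
        case False then show ?thesis by simp
      qed
    qed
    also have "\<dots> = 0" by (rule nn0)
    finally have "ennreal (?c / 2) * emeasure lborel ?Q \<le> 0" .
    moreover have "0 < ennreal (?c / 2) * emeasure lborel ?Q"
      using cpos by (simp add: emeasure_Qc ennreal_mult''[symmetric])
    ultimately show False using leD by blast
  qed
  have "\<exists>c. \<forall>x\<in>UNIV. g x = c"
  proof (rule has_derivative_zero_constant[OF convex_UNIV])
    fix x :: "real ^ 'n"
    have "(g has_derivative (\<lambda>h. Hs x *v h)) (at x)" by (rule hess)
    then show "(g has_derivative (\<lambda>h. 0)) (at x within UNIV)" by (simp add: H0)
  qed
  then obtain c where c: "\<And>x. g x = c" by blast
  have "(\<integral>\<^sup>+y. ennreal (norm (g y)) \<partial>lborel) \<noteq> \<infinity>" using integrableD(2)[OF grad_int] by simp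
  then have "ennreal (norm c) * \<infinity> \<noteq> \<infinity>" by (simp add: c)
  then have "c = 0" by (simp add: ennreal_mult_top top_ennreal_def[symmetric] split: if_splits)
  then show "g x = 0" by (simp add: c)
qed

end

theorem lemma4p5:
  fixes f :: "real ^ 'n \<Rightarrow> real"
    and g :: "real ^ 'n \<Rightarrow> real ^ 'n"
    and Hs :: "real ^ 'n \<Rightarrow> real ^ 'n ^ 'n"
  assumes grad: "\<And>x. (f has_derivative (\<lambda>h. g x \<bullet> h)) (at x)"
    and hess: "\<And>x. (g has_derivative (\<lambda>h. Hs x *v h)) (at x)"
    and hess_cont: "continuous_on UNIV Hs"
    and Hfin: "\<exists>m. Hn m Hs < \<infinity>"
    and grad_int: "integrable lborel (\<lambda>x. norm (g x))"
  shows "\<forall>n0::nat. \<exists>C>0. \<forall>n\<ge>n0.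
           (\<lambda>\<alpha>::int ^ 'n. inverse (2 ^ (n * CARD('n))) * norm (g (grid_pt n \<alpha>))) summable_on UNIV
         \<and> integrable lborel (\<lambda>x. frob (Hs x))
         \<and> \<bar>(\<Sum>\<^sub>\<infinity>\<alpha>\<in>(UNIV :: (int ^ 'n) set). inverse (2 ^ (n * CARD('n))) * norm (g (grid_pt n \<alpha>)))
              - (\<integral>x. norm (g x) \<partial>lborel)\<bar>
           \<le> C * inverse (2 ^ n) * (\<integral>x. frob (Hs x) \<partial>lborel)"
proof -
  let ?s = "CARD('n)"
  define S where "S n = (\<Sum>\<^sub>\<infinity>\<alpha>\<in>(UNIV :: (int ^ 'n) set). inverse (2 ^ (n * CARD('n))) * norm (g (grid_pt n \<alpha>)))" for n
  define D where "D n = \<bar>S n - (\<integral>x. norm (g x) \<partial>lborel)\<bar>" for n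
  define I where "I = (\<integral>x. frob (Hs x) \<partial>lborel)"
  obtain m where Hm: "Hn m Hs < \<infinity>" using Hfin by blast
  have Emf: "(\<integral>\<^sup>+y. ennreal (Mx Hs m (cell m y)) \<partial>lborel) < \<infinity>"
    by (rule Hfin_E(1)[OF hess hess_cont grad_int Hm])
  have Msum: "(\<lambda>\<alpha>::int ^ 'n. inverse (2 ^ (m * CARD('n))) * Mx Hs m \<alpha>) summable_on UNIV"
    by (rule Hfin_E(2)[OF hess hess_cont grad_int Hm])
  have fint: "integrable lborel (\<lambda>x. frob (Hs x))"
    by (rule frob_integrable[OF hess hess_cont grad_int Emf])
  have Enf: "(\<integral>\<^sup>+y. ennreal (Mx Hs n (cell n y)) \<partial>lborel) < \<infinity>" if "m \<le> n" for n
    using E_mono_nn[OF hess hess_cont grad_int that] Emf by (rule le_less_trans)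
  have summ: "(\<lambda>\<alpha>::int ^ 'n. inverse (2 ^ (n * CARD('n))) * norm (g (grid_pt n \<alpha>))) summable_on UNIV" for n
  proof (cases "m \<le> n")
    case True
    show ?thesis by (rule level(1)[OF hess hess_cont grad_int Enf[OF True]])
  next
    case False
    then have nm: "n \<le> m" by simp
    show ?thesis
      by (rule small_summable[OF hess hess_cont grad_int nm level(1)[OF hess hess_cont grad_int Emf] Msum])
  qed
  define K where "K = real ?s ^ 3 * (\<integral>y. Mx Hs m (cell m y) \<partial>lborel)"
  have K0: "0 \<le> K"
    unfolding K_def by (intro mult_nonneg_nonneg integral_nonneg_AE AE_I2 Mx_nonneg[OF hess hess_cont]) simp
  have D0: "0 \<le> D n" for n by (simp add: D_def)
  have large: "D n \<le> inverse (2 ^ n) * K" if mn: "m \<le> n" for n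
  proof -
    have "D n \<le> real ?s ^ 3 * inverse (2 ^ n) * (\<integral>y. Mx Hs n (cell n y) \<partial>lborel)"
      unfolding D_def S_def by (rule level(2)[OF hess hess_cont grad_int Enf[OF mn]])
    also have "\<dots> \<le> real ?s ^ 3 * inverse (2 ^ n) * (\<integral>y. Mx Hs m (cell m y) \<partial>lborel)"
      by (intro mult_left_mono E_mono_int[OF hess hess_cont grad_int mn Emf]) simp
    also have "\<dots> = inverse (2 ^ n) * K" by (simp add: K_def)
    finally show ?thesis .
  qed
  define B where "B = K + (\<Sum>k<m. 2 ^ k * D k)"
  have sum0: "0 \<le> (\<Sum>k<m. 2 ^ k * D k)" by (intro sum_nonneg mult_nonneg_nonneg D0) simp
  have B0: "0 \<le> B" unfolding B_def using K0 sum0 by simp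
  have bnd: "D n \<le> B * inverse (2 ^ n)" for n
  proof (cases "m \<le> n")
    case True
    have "D n \<le> inverse (2 ^ n) * K" by (rule large[OF True])
    also have "\<dots> \<le> inverse (2 ^ n) * B" unfolding B_def using sum0 by (intro mult_left_mono) simp_all
    finally show ?thesis by (simp add: mult.commute)
  next
    case False
    then have nm: "n \<in> {..<m}" by simp
    have "2 ^ n * D n \<le> (\<Sum>k<m. 2 ^ k * D k)"
      by (rule member_le_sum[OF nm]) (simp_all add: D0)
    also have "\<dots> \<le> B" unfolding B_def using K0 by simp
    finally have "2 ^ n * D n \<le> B" .
    then have "inverse (2 ^ n) * (2 ^ n * D n) \<le> inverse (2 ^ n) * B" by (intro mult_left_mono) simp_all
    moreover have "inverse ((2::real) ^ n) * (2 ^ n * D n) = D n" by simp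
    ultimately have "D n \<le> inverse (2 ^ n) * B" by linarith
    then show ?thesis by (subst mult.commute) assumption
  qed
  have I0: "0 \<le> I" unfolding I_def by (intro integral_nonneg_AE AE_I2 frob_nonneg)
  show ?thesis
  proof (intro allI)
    fix n0 :: nat
    show "\<exists>C>0. \<forall>n\<ge>n0.
           (\<lambda>\<alpha>::int ^ 'n. inverse (2 ^ (n * CARD('n))) * norm (g (grid_pt n \<alpha>))) summable_on UNIV
         \<and> integrable lborel (\<lambda>x. frob (Hs x))
         \<and> \<bar>(\<Sum>\<^sub>\<infinity>\<alpha>\<in>(UNIV :: (int ^ 'n) set). inverse (2 ^ (n * CARD('n))) * norm (g (grid_pt n \<alpha>)))
              - (\<integral>x. norm (g x) \<partial>lborel)\<bar>
           \<le> C * inverse (2 ^ n) * (\<integral>x. frob (Hs x) \<partial>lborel)"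
    proof (cases "I = 0")
      case True
      have g0: "\<And>x. g x = 0"
        by (rule zero_case[OF hess hess_cont grad_int _ fint]) (use True in \<open>simp add: I_def\<close>)
      show ?thesis
      proof (intro exI[of _ "1::real"] conjI allI impI)
        fix n assume "n0 \<le> n"
        show "(\<lambda>\<alpha>::int ^ 'n. inverse (2 ^ (n * CARD('n))) * norm (g (grid_pt n \<alpha>))) summable_on UNIV"
          by (rule summ)
        show "integrable lborel (\<lambda>x. frob (Hs x))" by (rule fint)
        show "\<bar>(\<Sum>\<^sub>\<infinity>\<alpha>\<in>(UNIV :: (int ^ 'n) set). inverse (2 ^ (n * CARD('n))) * norm (g (grid_pt n \<alpha>)))
              - (\<integral>x. norm (g x) \<partial>lborel)\<bar>
           \<le> 1 * inverse (2 ^ n) * (\<integral>x. frob (Hs x) \<partial>lborel)"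
          using True by (simp add: g0 I_def)
      qed simp
    next
      case False
      then have Ipos: "0 < I" using I0 by simp
      define C where "C = B / I + 1"
      have "0 \<le> B / I" by (rule divide_nonneg_pos[OF B0 Ipos])
      then have Cpos: "0 < C" unfolding C_def by linarith
      have CI: "C * I = B + I" unfolding C_def using Ipos by (simp add: field_simps)
      show ?thesis
      proof (intro exI[of _ C] conjI allI impI Cpos)
        fix n assume "n0 \<le> n"
        show "(\<lambda>\<alpha>::int ^ 'n. inverse (2 ^ (n * CARD('n))) * norm (g (grid_pt n \<alpha>))) summable_on UNIV"
          by (rule summ)
        show "integrable lborel (\<lambda>x. frob (Hs x))" by (rule fint)
        have "D n \<le> B * inverse (2 ^ n)" by (rule bnd)
        also have "\<dots> \<le> (B + I) * inverse (2 ^ n)" using Ipos by (intro mult_right_mono) simp_all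
        also have "\<dots> = (C * I) * inverse (2 ^ n)" unfolding CI ..
        also have "\<dots> = C * inverse (2 ^ n) * I" by (simp only: mult.assoc mult.commute[of I])
        finally show "\<bar>(\<Sum>\<^sub>\<infinity>\<alpha>\<in>(UNIV :: (int ^ 'n) set). inverse (2 ^ (n * CARD('n))) * norm (g (grid_pt n \<alpha>)))
              - (\<integral>x. norm (g x) \<partial>lborel)\<bar>
           \<le> C * inverse (2 ^ n) * (\<integral>x. frob (Hs x) \<partial>lborel)"
          unfolding D_def S_def I_def .
      qed
    qed
  qed
qed

end
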